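(* Let $G$ be a connected split graph with at least two vertices. A vertex $v\in V(G)$ is an $\mathcal{F}$-branch leaf of some DFS ordering of $G$ if and only if $v$ is not a cut vertex of $G$.
   Context: Graphs are finite, simple, undirected. A split graph is a graph whose vertex set can be partitioned into a clique and an independent set. A vertex ordering of $G$ is a bijection $\sigma:\{1,\dots,n\}\to V(G)$; $u\prec_\sigma w$ means $u$ comes before $w$. DFS orderings are produced by the label search: initially all labels are $\emptyset$; for $i=1,\dots,n$ choose any unnumbered vertex $x$ such that there is no unnumbered $y$ with $\mathrm{label}(x)\prec\mathrm{label}(y)$, set $\sigma(i)=x$, and add $i$ to the labels of the unnumbered neighbors of $x$, where $A\prec B$ iff ($A=\emptyset$ and $B\neq\emptyset$) or $\max(A)<\max(B)$. The $\mathcal{F}$-tree of $\sigma$ is the spanning tree containing, for each $v\neq\sigma(1)$, the edge from $v$ to its leftmost neighbor in $\sigma$. A vertex $v\neq\sigma(1)$ that is a leaf of the $\mathcal{F}$-tree is an $\mathcal{F}$-branch leaf of $\sigma$. *)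

theory Defs
  imports Main
begin

definition graph :: "'a set \<Rightarrow> ('a \<Rightarrow> 'a \<Rightarrow> bool) \<Rightarrow> bool" where
  "graph V E \<longleftrightarrow> finite V \<and> (\<forall>x y. E x y \<longrightarrow> x \<in> V \<and> y \<in> V)
     \<and> (\<forall>x y. E x y \<longrightarrow> E y x) \<and> (\<forall>x. \<not> E x x)"

definition reach_in :: "'a set \<Rightarrow> ('a \<Rightarrow> 'a \<Rightarrow> bool) \<Rightarrow> 'a \<Rightarrow> 'a \<Rightarrow> bool" where
  "reach_in S E = (\<lambda>a b. E a b \<and> a \<in> S \<and> b \<in> S)\<^sup>*\<^sup>*"

definition connected_graph :: "'a set \<Rightarrow> ('a \<Rightarrow> 'a \<Rightarrow> bool) \<Rightarrow> bool" where
  "connected_graph V E \<longleftrightarrow> V \<noteq> {} \<and> (\<forall>x\<in>V. \<forall>y\<in>V. reach_in V E x y)"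

text \<open>v is a cut vertex: deleting v disconnects two vertices that were connected
(equivalently, increases the number of connected components).\<close>
definition cut_vertex :: "'a set \<Rightarrow> ('a \<Rightarrow> 'a \<Rightarrow> bool) \<Rightarrow> 'a \<Rightarrow> bool" where
  "cut_vertex V E v \<longleftrightarrow> v \<in> V \<and> (\<exists>x\<in>V - {v}. \<exists>y\<in>V - {v}.
      reach_in V E x y \<and> \<not> reach_in (V - {v}) E x y)"

definition split_graph :: "'a set \<Rightarrow> ('a \<Rightarrow> 'a \<Rightarrow> bool) \<Rightarrow> bool" where
  "split_graph V E \<longleftrightarrow> (\<exists>K I. K \<union> I = V \<and> K \<inter> I = {}
      \<and> (\<forall>x\<in>K. \<forall>y\<in>K. x \<noteq> y \<longrightarrow> E x y) \<and> (\<forall>x\<in>I. \<forall>y\<in>I. \<not> E x y))"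

text \<open>Vertex orderings are lists: sigma(i) = xs ! (i - 1) for i = 1..n.\<close>
definition vertex_ordering :: "'a set \<Rightarrow> 'a list \<Rightarrow> bool" where
  "vertex_ordering V xs \<longleftrightarrow> distinct xs \<and> set xs = V"

definition label_prec :: "nat set \<Rightarrow> nat set \<Rightarrow> bool" where
  "label_prec A B \<longleftrightarrow> (A = {} \<and> B \<noteq> {}) \<or> (A \<noteq> {} \<and> B \<noteq> {} \<and> Max A < Max B)"

text \<open>Label of vertex u just before step number i+1 (1-based), i.e. after the
first i vertices xs!0..xs!(i-1) (numbers 1..i) have been numbered.\<close>
definition dfs_label :: "('a \<Rightarrow> 'a \<Rightarrow> bool) \<Rightarrow> 'a list \<Rightarrow> nat \<Rightarrow> 'a \<Rightarrow> nat set" where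
  "dfs_label E xs i u = {j + 1 | j. j < i \<and> E (xs ! j) u}"

definition dfs_ordering :: "'a set \<Rightarrow> ('a \<Rightarrow> 'a \<Rightarrow> bool) \<Rightarrow> 'a list \<Rightarrow> bool" where
  "dfs_ordering V E xs \<longleftrightarrow> vertex_ordering V xs \<and>
     (\<forall>i < length xs. \<forall>k. i < k \<and> k < length xs \<longrightarrow>
        \<not> label_prec (dfs_label E xs i (xs ! i)) (dfs_label E xs i (xs ! k)))"

definition leftmost_nb :: "('a \<Rightarrow> 'a \<Rightarrow> bool) \<Rightarrow> 'a list \<Rightarrow> 'a \<Rightarrow> 'a" where
  "leftmost_nb E xs v = xs ! (LEAST j. j < length xs \<and> E (xs ! j) v)"

definition F_tree :: "'a set \<Rightarrow> ('a \<Rightarrow> 'a \<Rightarrow> bool) \<Rightarrow> 'a list \<Rightarrow> 'a set set" where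
  "F_tree V E xs = {{v, leftmost_nb E xs v} | v. v \<in> V \<and> v \<noteq> hd xs}"

definition F_branch_leaf :: "'a set \<Rightarrow> ('a \<Rightarrow> 'a \<Rightarrow> bool) \<Rightarrow> 'a list \<Rightarrow> 'a \<Rightarrow> bool" where
  "F_branch_leaf V E xs v \<longleftrightarrow> v \<in> V \<and> v \<noteq> hd xs \<and>
     card {e \<in> F_tree V E xs. v \<in> e} = 1"

end

theory Submission
  imports Defs
begin

lemma label_finite: "finite (dfs_label E xs i u)"
  by (rule finite_subset[of _ "Suc ` {..<i}"]) (auto simp: dfs_label_def)

lemma not_prec:
  fixes A B :: "nat set"
  assumes "finite A" "finite B" "B \<noteq> {} \<Longrightarrow> \<exists>a\<in>A. \<forall>b\<in>B. b \<le> a"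
  shows "\<not> label_prec A B"
proof (cases "B = {}")
  case True then show ?thesis by (simp add: label_prec_def)
next
  case False
  then obtain a where a: "a \<in> A" "\<forall>b\<in>B. b \<le> a" using assms(3) by blast
  have "Max B \<le> a" using a False assms(2) by simp
  also have "a \<le> Max A" using a assms(1) by simp
  finally show ?thesis using False a by (auto simp: label_prec_def)
qed

lemma crossing:
  assumes "R\<^sup>*\<^sup>* a b" "a \<in> S" "b \<notin> S"
  shows "\<exists>c d. R c d \<and> c \<in> S \<and> d \<notin> S"
  using assms by (induction rule: rtranclp.induct) auto

lemma reach_sym:
  assumes "\<forall>x y. E x y \<longrightarrow> E y x" "reach_in S E a b"
  shows "reach_in S E b a"
  using assms(2) unfolding reach_in_def
proof (induction rule: rtranclp.induct)
  case (rtrancl_refl a) then show ?case by simp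
next
  case (rtrancl_into_rtrancl a b c)
  then have "(\<lambda>a b. E a b \<and> a \<in> S \<and> b \<in> S) c b" using assms(1) by auto
  then show ?case using rtrancl_into_rtrancl.IH by (rule converse_rtranclp_into_rtranclp)
qed

lemma reach_in_mem:
  assumes "reach_in S E a b" "a \<in> S"
  shows "b \<in> S"
  using assms unfolding reach_in_def by (induction rule: rtranclp.induct) auto

lemma nonempty_label:
  assumes gr: "graph V E" and con: "connected_graph V E" and d: "dfs_ordering V E xs"
    and p: "0 < p" "p < length xs"
  shows "\<exists>j<p. E (xs!j) (xs!p)"
proof (rule ccontr)
  assume nj: "\<not> (\<exists>j<p. E (xs!j) (xs!p))"
  have vo: "distinct xs" "set xs = V" using d by (auto simp: dfs_ordering_def vertex_ordering_def)
  have "reach_in V E (xs!0) (xs!p)" using con vo p nth_mem[of 0 xs] nth_mem[of p xs] by (auto simp: connected_graph_def)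
  moreover have "xs!0 \<in> set (take p xs)" using p by (simp add: in_set_conv_nth) (metis nth_take p(1))
  moreover have "xs!p \<notin> set (take p xs)"
  proof
    assume "xs!p \<in> set (take p xs)"
    then obtain j where "j < p" "take p xs ! j = xs!p" by (auto simp: in_set_conv_nth)
    then show False using vo p by (simp add: nth_eq_iff_index_eq)
  qed
  ultimately obtain c dd where cd: "E c dd" "c \<in> set (take p xs)" "dd \<notin> set (take p xs)"
    using crossing[of _ "xs!0" "xs!p" "set (take p xs)"] unfolding reach_in_def by blast
  obtain j where j: "j < p" "c = xs!j" using cd(2) p by (auto simp: in_set_conv_nth)
  have "dd \<in> set xs" using cd(1) gr vo by (auto simp: graph_def)
  then obtain k where k: "k < length xs" "dd = xs!k" by (auto simp: in_set_conv_nth)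
  have "\<not> k < p"
  proof
    assume "k < p"
    then have "dd \<in> set (take p xs)" using k p by (auto simp: in_set_conv_nth intro!: exI[of _ k])
    then show False using cd by simp
  qed
  moreover have "k \<noteq> p" using nj j k cd by auto
  ultimately have kp: "p < k" by simp
  have "dfs_label E xs p (xs!p) = {}" using nj by (auto simp: dfs_label_def)
  moreover have "j + 1 \<in> dfs_label E xs p (xs!k)" using j k cd by (auto simp: dfs_label_def)
  ultimately have "label_prec (dfs_label E xs p (xs!p)) (dfs_label E xs p (xs!k))"
    by (auto simp: label_prec_def)
  then show False using d kp k p by (auto simp: dfs_ordering_def)
qed


lemma construct:
  assumes gr: "graph V E" and KI: "K \<union> I = V" "K \<inter> I = {}"
   and cl: "\<forall>x\<in>K. \<forall>y\<in>K. x \<noteq> y \<longrightarrow> E x y" and ind: "\<forall>x\<in>I. \<forall>y\<in>I. \<not> E x y"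
   and ks: "distinct ks" "set ks = K"
   and nb: "\<forall>x\<in>I. \<exists>k\<in>K. E k x"
  shows "\<exists>js. distinct js \<and> set js = I \<and> dfs_ordering V E (ks @ js)"
proof -
  define m where "m = length ks"
  define N where "N x = {j. j < m \<and> E (ks!j) x}" for x
  define g where "g x = m - Max (N x)" for x
  have "finite V" using gr by (simp add: graph_def)
  moreover have "I \<subseteq> V" using KI by blast
  ultimately have "finite I" by (rule finite_subset[rotated])
  then obtain is0 where is0: "set is0 = I" "distinct is0" using finite_distinct_list by blast
  define js where "js = sort_key g is0"
  have js: "set js = I" "distinct js" "sorted (map g js)" using is0 by (auto simp: js_def)
  have fin: "finite (N x)" for x by (rule finite_subset[of _ "{..<m}"]) (auto simp: N_def)
  have NI: "N x \<noteq> {} \<and> finite (N x) \<and> Max (N x) < m" if hx: "x \<in> I" for x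
  proof -
    obtain k where k: "k \<in> K" "E k x" using bspec[OF nb hx] by blast
    have "k \<in> set ks" using k(1) ks(2) by simp
    then obtain j where j: "j < m" "ks!j = k" unfolding m_def in_set_conv_nth by blast
    then have "j \<in> N x" using k by (simp add: N_def)
    then have ne: "N x \<noteq> {}" by blast
    have "Max (N x) \<in> N x" by (rule Max_in[OF fin ne])
    then have "Max (N x) < m" by (simp add: N_def)
    then show ?thesis using ne fin by blast
  qed
  define xs where "xs = ks @ js"
  have len: "length xs = m + length js" by (simp add: xs_def m_def)
  have xK: "xs!i = ks!i" if "i < m" for i using that by (simp add: xs_def m_def nth_append)
  have xI: "xs!i = js!(i-m)" if "m \<le> i" for i using that by (simp add: xs_def m_def nth_append)
  have xIm: "xs!i \<in> I" if "m \<le> i" "i < length xs" for i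
  proof -
    have "i - m < length js" using that len by simp
    then have "js!(i-m) \<in> set js" by (rule nth_mem)
    then show ?thesis using xI[OF that(1)] js(1) by simp
  qed
  have labI: "dfs_label E xs i u = Suc ` N u" if lu: "u \<in> I" "m \<le> i" "i \<le> length xs" for u i
  proof (rule set_eqI)
    fix b
    show "b \<in> dfs_label E xs i u \<longleftrightarrow> b \<in> Suc ` N u"
    proof
      assume "b \<in> dfs_label E xs i u"
      then obtain j where j: "b = j + 1" "j < i" "E (xs!j) u" by (auto simp: dfs_label_def)
      have "j < m"
      proof (rule ccontr)
        assume "\<not> j < m"
        then have "xs!j \<in> I" using xIm j lu by simp
        then show False using ind j lu by blast
      qed
      then show "b \<in> Suc ` N u" using j xK by (auto simp: N_def)
    next
      assume "b \<in> Suc ` N u"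
      then obtain j where "b = Suc j" "j < m" "E (ks!j) u" by (auto simp: N_def)
      then show "b \<in> dfs_label E xs i u" using xK lu by (auto simp: dfs_label_def intro!: exI[of _ j])
    qed
  qed
  have vo: "vertex_ordering V xs" using ks js KI by (auto simp: vertex_ordering_def xs_def)
  have "\<not> label_prec (dfs_label E xs i (xs ! i)) (dfs_label E xs i (xs ! k))"
    if ik: "i < k" "k < length xs" for i k
  proof (cases "i < m")
    case True
    show ?thesis
    proof (cases "i = 0")
      case True then show ?thesis by (simp add: dfs_label_def label_prec_def)
    next
      case False
      have "ks!(i-1) \<noteq> ks!i" using ks(1) \<open>i < m\<close> False by (simp add: m_def nth_eq_iff_index_eq)
      moreover have "ks!(i-1) \<in> K" "ks!i \<in> K" using ks(2) \<open>i < m\<close> by (auto simp: m_def)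
      ultimately have "E (xs!(i-1)) (xs!i)" using cl xK \<open>i < m\<close> by auto
      then have "i \<in> dfs_label E xs i (xs!i)" using False unfolding dfs_label_def
        by (auto intro!: exI[of _ "i-1"])
      moreover have "\<forall>b \<in> dfs_label E xs i (xs!k). b \<le> i" by (auto simp: dfs_label_def)
      ultimately show ?thesis by (intro not_prec label_finite) blast
    qed
  next
    case False
    define x where "x = xs!i"
    define y where "y = xs!k"
    have xy: "x \<in> I" "y \<in> I" using xIm False ik by (auto simp: x_def y_def)
    have "g x \<le> g y"
      using sorted_nth_mono[OF js(3), of "i-m" "k-m"] ik False len xI[of i] xI[of k]
      by (simp add: x_def y_def)
    moreover have "Max (N x) < m" "Max (N y) < m" using NI[OF xy(1)] NI[OF xy(2)] by blast+
    ultimately have mxy: "Max (N y) \<le> Max (N x)" unfolding g_def by linarith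
    have A: "dfs_label E xs i x = Suc ` N x" using labI xy False ik by simp
    have B: "dfs_label E xs i y = Suc ` N y" using labI xy False ik by simp
    have "Suc (Max (N x)) \<in> Suc ` N x" using NI[OF xy(1)] by simp
    moreover have "\<forall>b\<in>Suc ` N y. b \<le> Suc (Max (N x))" using NI[OF xy(2)] mxy by auto
    ultimately show ?thesis unfolding x_def[symmetric] y_def[symmetric] A B
      using NI[OF xy(1)] NI[OF xy(2)] by (intro not_prec) blast+
  qed
  then have "dfs_ordering V E xs" using vo by (auto simp: dfs_ordering_def)
  then show ?thesis using js xs_def by blast
qed


lemma leaf_suff:
  assumes vo: "vertex_ordering V xs" and v: "v \<in> V" "v \<noteq> hd xs"
   and nl: "\<forall>w\<in>V. w \<noteq> hd xs \<longrightarrow> w \<noteq> v \<longrightarrow> leftmost_nb E xs w \<noteq> v"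
  shows "F_branch_leaf V E xs v"
proof -
  have "{e \<in> F_tree V E xs. v \<in> e} = {{v, leftmost_nb E xs v}}"
  proof (rule set_eqI, rule iffI)
    fix e assume "e \<in> {e \<in> F_tree V E xs. v \<in> e}"
    then obtain w where w: "e = {w, leftmost_nb E xs w}" "w \<in> V" "w \<noteq> hd xs" "v \<in> e"
      by (auto simp: F_tree_def)
    show "e \<in> {{v, leftmost_nb E xs v}}"
    proof (cases "w = v")
      case True then show ?thesis using w by simp
    next
      case False then show ?thesis using w nl by auto
    qed
  next
    fix e assume "e \<in> {{v, leftmost_nb E xs v}}"
    then show "e \<in> {e \<in> F_tree V E xs. v \<in> e}" using v by (auto simp: F_tree_def)
  qed
  then show ?thesis using v by (simp add: F_branch_leaf_def)
qed

lemma lm_adj: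
  assumes "q < length xs" "E (xs!q) w"
  shows "E (leftmost_nb E xs w) w \<and> (\<exists>j\<le>q. leftmost_nb E xs w = xs!j)"
proof -
  define j0 where "j0 = (LEAST j. j < length xs \<and> E (xs!j) w)"
  have "j0 < length xs \<and> E (xs!j0) w" unfolding j0_def by (rule LeastI[of _ q]) (use assms in simp)
  moreover have "j0 \<le> q" unfolding j0_def by (rule Least_le) (use assms in simp)
  ultimately show ?thesis by (auto simp: leftmost_nb_def j0_def[symmetric])
qed

lemma cut_not_leaf:
  assumes gr: "graph V E" and con: "connected_graph V E" and d: "dfs_ordering V E xs"
    and cut: "cut_vertex V E v"
  shows "\<not> F_branch_leaf V E xs v"
proof
  assume leaf: "F_branch_leaf V E xs v"
  have vo: "distinct xs" "set xs = V" using d by (auto simp: dfs_ordering_def vertex_ordering_def)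
  have v: "v \<in> V" "v \<noteq> hd xs" using leaf by (auto simp: F_branch_leaf_def)
  have sym: "\<forall>x y. E x y \<longrightarrow> E y x" using gr by (simp add: graph_def)
  obtain x y where xy: "x \<in> V - {v}" "y \<in> V - {v}" "reach_in V E x y" "\<not> reach_in (V - {v}) E x y"
    using cut by (auto simp: cut_vertex_def)
  have xsne: "xs \<noteq> []" using v vo by auto
  define h where "h = hd xs"
  have h0: "h = xs!0" using xsne by (simp add: h_def hd_conv_nth)
  have hV: "h \<in> V - {v}" using xsne vo v by (auto simp: h_def)
  obtain z where z: "z \<in> V - {v}" "\<not> reach_in (V - {v}) E h z"
  proof -
    have "\<not> (reach_in (V - {v}) E h x \<and> reach_in (V - {v}) E h y)"
    proof
      assume "reach_in (V - {v}) E h x \<and> reach_in (V - {v}) E h y"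
      then have "reach_in (V - {v}) E x h" "reach_in (V - {v}) E h y" using reach_sym[OF sym] by blast+
      then have "reach_in (V - {v}) E x y" unfolding reach_in_def by (rule rtranclp_trans)
      then show False using xy by simp
    qed
    then show ?thesis using that xy by blast
  qed
  define C where "C = {u. reach_in (V - {v}) E z u}"
  have zC: "z \<in> C" by (simp add: C_def reach_in_def)
  have hC: "h \<notin> C" using z reach_sym[OF sym] by (auto simp: C_def)
  have CV: "C \<subseteq> V - {v}"
  proof
    fix u assume "u \<in> C"
    then have "reach_in (V - {v}) E z u" by (simp add: C_def)
    then show "u \<in> V - {v}" using z(1) by (rule reach_in_mem)
  qed
  have "z \<in> set xs" using z vo by simp
  then obtain q where q: "q < length xs" "xs!q = z" by (auto simp: in_set_conv_nth)
  define p where "p = (LEAST p. p < length xs \<and> xs!p \<in> C)"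
  have pP: "p < length xs \<and> xs!p \<in> C" unfolding p_def by (rule LeastI[of _ q]) (use q zC in simp)
  have pmin: "xs!p' \<notin> C" if "p' < p" for p'
  proof
    assume "xs!p' \<in> C"
    then have "p \<le> p'" unfolding p_def using that pP by (intro Least_le) simp
    then show False using that by simp
  qed
  have p0: "0 < p" using pP hC h0 by (cases p) auto
  obtain j where j: "j < p" "E (xs!j) (xs!p)" using nonempty_label[OF gr con d p0] pP by blast
  obtain j0 where j0: "j0 \<le> j" "leftmost_nb E xs (xs!p) = xs!j0" "E (xs!j0) (xs!p)"
    using lm_adj[of j xs E "xs!p"] j pP by auto
  have "xs!j0 = v"
  proof (rule ccontr)
    assume ne: "xs!j0 \<noteq> v"
    have "j0 < length xs" using j0 j pP by simp
    then have "xs!j0 \<in> V" using vo nth_mem by blast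
    moreover have "xs!p \<in> V - {v}" using pP CV by blast
    ultimately have "(\<lambda>a b. E a b \<and> a \<in> V - {v} \<and> b \<in> V - {v}) (xs!p) (xs!j0)"
      using ne sym[rule_format, OF j0(3)] by blast
    moreover have "reach_in (V - {v}) E z (xs!p)" using pP by (simp add: C_def)
    ultimately have "reach_in (V - {v}) E z (xs!j0)" unfolding reach_in_def
      by (rule rtranclp.rtrancl_into_rtrancl[rotated])
    then show False using pmin[of j0] j0 j by (simp add: C_def)
  qed
  define w where "w = xs!p"
  have lmw: "leftmost_nb E xs w = v" using j0 \<open>xs!j0 = v\<close> by (simp add: w_def)
  have wv: "w \<noteq> v" "w \<noteq> hd xs" "w \<in> V" using pP CV hC by (auto simp: w_def h_def)
  have j00: "0 < j0" using \<open>xs!j0 = v\<close> h0 v by (cases j0) (auto simp: h_def)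
  have j0l: "j0 < length xs" using j0 j pP by simp
  obtain j1 where j1: "j1 < j0" "E (xs!j1) (xs!j0)" using nonempty_label[OF gr con d j00 j0l] by blast
  obtain j2 where j2: "j2 \<le> j1" "leftmost_nb E xs v = xs!j2"
    using lm_adj[of j1 xs E "xs!j0"] j1 j0l \<open>xs!j0 = v\<close> by auto
  have "xs!j2 \<noteq> xs!p" using j2 j1 j0 j pP vo by (simp add: nth_eq_iff_index_eq)
  then have lmv: "leftmost_nb E xs v \<noteq> w" using j2 by (simp add: w_def)
  let ?S = "{e \<in> F_tree V E xs. v \<in> e}"
  have e1: "{v, leftmost_nb E xs v} \<in> ?S" using v by (auto simp: F_tree_def)
  have e2: "{w, leftmost_nb E xs w} \<in> ?S" using wv lmw by (auto simp: F_tree_def)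
  have ne: "{v, leftmost_nb E xs v} \<noteq> {w, leftmost_nb E xs w}" 
  proof
    assume "{v, leftmost_nb E xs v} = {w, leftmost_nb E xs w}"
    then have "w \<in> {v, leftmost_nb E xs v}" by blast
    then show False using lmv wv(1) by blast
  qed
  have "card ?S = 1" using leaf by (simp add: F_branch_leaf_def)
  then obtain c where Sc: "?S = {c}" by (rule card_1_singletonE)
  have "{v, leftmost_nb E xs v} \<in> {c}" using e1 unfolding Sc .
  moreover have "{w, leftmost_nb E xs w} \<in> {c}" using e2 unfolding Sc .
  ultimately show False using ne by simp
qed


lemma nbI:
  assumes gr: "graph V E" and con: "connected_graph V E" and c2: "card V \<ge> 2"
    and KI: "K \<union> I = V" and ind: "\<forall>x\<in>I. \<forall>y\<in>I. \<not> E x y" and x: "x \<in> I"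
  shows "\<exists>k\<in>K. E k x"
proof -
  have xV: "x \<in> V" using KI x by blast
  have "\<not> V \<subseteq> {x}"
  proof
    assume "V \<subseteq> {x}"
    then have "card V \<le> card {x}" by (intro card_mono) auto
    then show False using c2 by simp
  qed
  then obtain y where y: "y \<in> V" "y \<noteq> x" by blast
  have "reach_in V E x y" using con xV y by (simp add: connected_graph_def)
  then obtain c d where cd: "E c d \<and> c \<in> V \<and> d \<in> V" "c \<in> {x}" "d \<notin> {x}"
    using crossing[of _ x y "{x}"] y unfolding reach_in_def by blast
  then have "E x d" "d \<in> V" by auto
  moreover have "d \<notin> I" using ind x \<open>E x d\<close> by blast
  ultimately have "d \<in> K" "E d x" using KI gr by (auto simp: graph_def)
  then show ?thesis by blast
qed

lemma leaf_in_I: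
  assumes gr: "graph V E" and con: "connected_graph V E" and c2: "card V \<ge> 2"
   and KI: "K \<union> I = V" "K \<inter> I = {}"
   and cl: "\<forall>x\<in>K. \<forall>y\<in>K. x \<noteq> y \<longrightarrow> E x y" and ind: "\<forall>x\<in>I. \<forall>y\<in>I. \<not> E x y"
   and v: "v \<in> I"
  shows "\<exists>xs. dfs_ordering V E xs \<and> F_branch_leaf V E xs v"
proof -
  have nb: "\<forall>x\<in>I. \<exists>k\<in>K. E k x" using nbI[OF gr con c2 KI(1) ind] by blast
  have "finite V" using gr by (simp add: graph_def)
  moreover have "K \<subseteq> V" using KI by blast
  ultimately have "finite K" by (rule finite_subset[rotated])
  then obtain ks where ks: "set ks = K" "distinct ks" using finite_distinct_list by blast
  obtain js where js: "distinct js" "set js = I" "dfs_ordering V E (ks @ js)"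
    using construct[OF gr KI cl ind ks(2) ks(1) nb] by blast
  define xs where "xs = ks @ js"
  have "K \<noteq> {}" using nb v by blast
  then have ksne: "ks \<noteq> []" using ks by auto
  have hd: "hd xs = ks!0" "xs!0 = ks!0" using ksne by (auto simp: xs_def hd_conv_nth nth_append)
  have hK: "hd xs \<in> K" using hd ksne ks by (metis length_greater_0_conv nth_mem)
  have vo: "vertex_ordering V xs" using js by (simp add: xs_def dfs_ordering_def)
  have vV: "v \<in> V" "v \<noteq> hd xs" using v KI hK by auto
  have "\<forall>w\<in>V. w \<noteq> hd xs \<longrightarrow> w \<noteq> v \<longrightarrow> leftmost_nb E xs w \<noteq> v"
  proof (intro ballI impI)
    fix w assume w: "w \<in> V" "w \<noteq> hd xs" "w \<noteq> v"
    show "leftmost_nb E xs w \<noteq> v"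
    proof (cases "w \<in> K")
      case True
      have "E (xs!0) w" using cl True hK hd w by metis
      then obtain j where "j \<le> 0" "leftmost_nb E xs w = xs!j"
        using lm_adj[of 0 xs E w] ksne by (auto simp: xs_def)
      then show ?thesis using hd vV by simp
    next
      case False
      then have wI: "w \<in> I" using w KI by blast
      obtain k where k: "k \<in> K" "E k w" using nb wI by blast
      then have "k \<in> set xs" using ks by (simp add: xs_def)
      then obtain q where q: "q < length xs" "xs!q = k" by (auto simp: in_set_conv_nth)
      have "E (leftmost_nb E xs w) w" using lm_adj[of q xs E w] q k by simp
      then show ?thesis using ind v wI by blast
    qed
  qed
  then have "F_branch_leaf V E xs v" using leaf_suff[OF vo vV] by blast
  then show ?thesis using js xs_def by blast
qed

lemma leaf_in_K:
  assumes gr: "graph V E" and c2: "card V \<ge> 2"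
   and KI: "K \<union> I = V" "K \<inter> I = {}"
   and cl: "\<forall>x\<in>K. \<forall>y\<in>K. x \<noteq> y \<longrightarrow> E x y" and ind: "\<forall>x\<in>I. \<forall>y\<in>I. \<not> E x y"
   and v: "v \<in> K" and nbv: "\<forall>x\<in>I. \<exists>k\<in>K - {v}. E k x"
  shows "\<exists>xs. dfs_ordering V E xs \<and> F_branch_leaf V E xs v"
proof -
  have nb: "\<forall>x\<in>I. \<exists>k\<in>K. E k x" using nbv by blast
  have "finite V" using gr by (simp add: graph_def)
  moreover have "K \<subseteq> V" using KI by blast
  ultimately have "finite K" by (rule finite_subset[rotated])
  then have "finite (K - {v})" by simp
  then obtain ks0 where ks0: "set ks0 = K - {v}" "distinct ks0" using finite_distinct_list by blast
  have "K - {v} \<noteq> {}"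
  proof
    assume Kv: "K - {v} = {}"
    have "I \<noteq> {}"
    proof
      assume I0: "I = {}"
      have "K \<subseteq> {v}" using Kv by (simp add: Diff_eq_empty_iff)
      then have "V \<subseteq> {v}" using KI I0 by simp
      then have "card V \<le> card {v}" by (intro card_mono) auto
      then show False using c2 by simp
    qed
    then obtain x where x: "x \<in> I" by blast
    have "\<exists>k\<in>K - {v}. E k x" using bspec[OF nbv x] .
    then show False using Kv by simp
  qed
  have ks0ne: "ks0 \<noteq> []"
  proof
    assume "ks0 = []"
    then have "K - {v} = {}" using ks0 by (metis empty_set)
    then show False using \<open>K - {v} \<noteq> {}\<close> by contradiction
  qed
  define ks where "ks = ks0 @ [v]"
  have ks: "distinct ks" "set ks = K" using ks0 v by (simp_all add: ks_def insert_absorb)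
  obtain js where js: "distinct js" "set js = I" "dfs_ordering V E (ks @ js)"
    using construct[OF gr KI cl ind ks nb] by blast
  define xs where "xs = ks @ js"
  have xs0: "xs!i = ks0!i" if "i < length ks0" for i using that by (simp add: xs_def ks_def nth_append)
  have hd: "hd xs = ks0!0" "xs!0 = ks0!0" using ks0ne by (auto simp: xs_def ks_def hd_conv_nth nth_append)
  have hK: "hd xs \<in> K - {v}" using hd ks0ne ks0 by (metis length_greater_0_conv nth_mem)
  have vo: "vertex_ordering V xs" using js by (simp add: xs_def dfs_ordering_def)
  have vV: "v \<in> V" "v \<noteq> hd xs" using v KI hK by auto
  have lenx: "length ks0 < length xs" by (simp add: xs_def ks_def)
  have "\<forall>w\<in>V. w \<noteq> hd xs \<longrightarrow> w \<noteq> v \<longrightarrow> leftmost_nb E xs w \<noteq> v"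
  proof (intro ballI impI)
    fix w assume w: "w \<in> V" "w \<noteq> hd xs" "w \<noteq> v"
    show "leftmost_nb E xs w \<noteq> v"
    proof (cases "w \<in> K")
      case True
      have "xs!0 \<in> K" "xs!0 \<noteq> w" using hK hd w by auto
      then have "E (xs!0) w" using cl True by blast
      then obtain j where "j \<le> 0" "leftmost_nb E xs w = xs!j"
        using lm_adj[of 0 xs E w, OF _ \<open>E (xs!0) w\<close>] lenx by (metis gr_zeroI less_zeroE)
      then show ?thesis using hd vV by simp
    next
      case False
      then have wI: "w \<in> I" using w KI by blast
      obtain k where k: "k \<in> K - {v}" "E k w" using nbv wI by blast
      then have "k \<in> set ks0" using ks0 by simp
      then obtain q where q: "q < length ks0" "ks0!q = k" by (auto simp: in_set_conv_nth)
      then have "xs!q = k" using xs0 by simp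
      then obtain j where j: "j \<le> q" "leftmost_nb E xs w = xs!j"
        using lm_adj[of q xs E w] q k lenx by auto
      then have "leftmost_nb E xs w = ks0!j" using xs0 q by simp
      moreover have "j < length ks0" using j q by simp
      then have "ks0!j \<in> set ks0" by (rule nth_mem)
      then have "ks0!j \<in> K - {v}" using ks0 by simp
      ultimately show ?thesis by (metis DiffD2 singletonI)
    qed
  qed
  then have "F_branch_leaf V E xs v" using leaf_suff[OF vo vV] by blast
  then show ?thesis using js xs_def by blast
qed

theorem theorem14:
  fixes V :: "'a set" and E :: "'a \<Rightarrow> 'a \<Rightarrow> bool" and v :: 'a
  assumes "graph V E" and "connected_graph V E" and "split_graph V E"
    and "card V \<ge> 2" and "v \<in> V"
  shows "(\<exists>xs. dfs_ordering V E xs \<and> F_branch_leaf V E xs v) \<longleftrightarrow> \<not> cut_vertex V E v"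
proof
  assume "\<exists>xs. dfs_ordering V E xs \<and> F_branch_leaf V E xs v"
  then show "\<not> cut_vertex V E v" using cut_not_leaf[OF assms(1,2)] by blast
next
  assume nc: "\<not> cut_vertex V E v"
  note gr = assms(1) and con = assms(2) and c2 = assms(4)
  obtain K I where KI: "K \<union> I = V" "K \<inter> I = {}"
    and cl: "\<forall>x\<in>K. \<forall>y\<in>K. x \<noteq> y \<longrightarrow> E x y" and ind: "\<forall>x\<in>I. \<forall>y\<in>I. \<not> E x y"
    using assms(3) unfolding split_graph_def by blast
  have sym: "\<And>x y. E x y \<Longrightarrow> E y x" and irr: "\<And>x. \<not> E x x" using gr by (auto simp: graph_def)
  show "\<exists>xs. dfs_ordering V E xs \<and> F_branch_leaf V E xs v"
  proof (cases "v \<in> I")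
    case True
    then show ?thesis using leaf_in_I[OF gr con c2 KI cl ind] by blast
  next
    case False
    then have vK: "v \<in> K" using assms(5) KI by blast
    show ?thesis
    proof (cases "\<forall>x\<in>I. \<exists>k\<in>K - {v}. E k x")
      case True
      then show ?thesis using leaf_in_K[OF gr c2 KI cl ind vK] by blast
    next
      case False
      then obtain x where x: "x \<in> I" "\<forall>k\<in>K - {v}. \<not> E k x" by blast
      have xv: "x \<noteq> v" "x \<in> V" using x vK KI by auto
      have V2: "V = {x, v}"
      proof (rule ccontr)
        assume "V \<noteq> {x, v}"
        then obtain y where y: "y \<in> V" "y \<noteq> x" "y \<noteq> v" using xv assms(5) by blast
        have r: "reach_in V E x y" using con xv y by (simp add: connected_graph_def)
        have "\<not> reach_in (V - {v}) E x y"
        proof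
          assume "reach_in (V - {v}) E x y"
          then obtain c d where cd: "E c d \<and> c \<in> V - {v} \<and> d \<in> V - {v}" "c \<in> {x}" "d \<notin> {x}"
            using crossing[of _ x y "{x}"] y unfolding reach_in_def by blast
          then have "E x d" "d \<in> V" "d \<noteq> v" by auto
          moreover have "d \<notin> I" using ind x \<open>E x d\<close> by blast
          ultimately have "d \<in> K - {v}" "E d x" using KI sym by auto
          then show False using x by blast
        qed
        then have "cut_vertex V E v" using r xv y assms(5) by (auto simp: cut_vertex_def)
        then show False using nc by simp
      qed
      have KI': "{x} \<union> {v} = V" "{x} \<inter> {v} = {}" using V2 xv by auto
      have cl': "\<forall>a\<in>{x}. \<forall>b\<in>{x}. a \<noteq> b \<longrightarrow> E a b" by simp
      have ind': "\<forall>a\<in>{v}. \<forall>b\<in>{v}. \<not> E a b" using irr by simp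
      show ?thesis using leaf_in_I[OF gr con c2 KI' cl' ind'] by blast
    qed
  qed
qed

end
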